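(* Let $n\ge 1$ and $1\le p\le k\le n$. The number $F(n;p,k)$ of $\alpha\in\mathcal{ORCT}_n$ with $h(\alpha)=p$ and $w^+(\alpha)=k$ equals $2\binom{n-1}{p-1}$ if $p>1$, and equals $1$ if $p=1$.
   Context: $X_n=\{1,2,\dots,n\}$ with its usual order; maps are written on the right ($x\alpha$). A map $\alpha:X_n\to X_n$ is order-preserving if $x\le y$ implies $x\alpha\le y\alpha$, order-reversing if $x\le y$ implies $x\alpha\ge y\alpha$, and a contraction if $|x\alpha-y\alpha|\le|x-y|$ for all $x,y$. $\mathcal{ORCT}_n$ is the set of all maps $X_n\to X_n$ (defined on all of $X_n$) that are contractions and are either order-preserving or order-reversing. Height $h(\alpha)=|\mathrm{Im}\,\alpha|$; right waist $w^+(\alpha)=\max(\mathrm{Im}\,\alpha)$. *)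

theory Defs
  imports "HOL-Library.FuncSet"
begin

text \<open>Maps X_n -> X_n with X_n = {1..n}, represented as extensional functions
  (value undefined outside {1..n}), i.e. elements of {1..n} ->E {1..n}.\<close>

definition Xn :: "nat \<Rightarrow> nat set" where
  "Xn n = {1..n}"

definition order_preserving :: "nat \<Rightarrow> (nat \<Rightarrow> nat) \<Rightarrow> bool" where
  "order_preserving n f \<longleftrightarrow> (\<forall>x\<in>Xn n. \<forall>y\<in>Xn n. x \<le> y \<longrightarrow> f x \<le> f y)"

definition order_reversing :: "nat \<Rightarrow> (nat \<Rightarrow> nat) \<Rightarrow> bool" where
  "order_reversing n f \<longleftrightarrow> (\<forall>x\<in>Xn n. \<forall>y\<in>Xn n. x \<le> y \<longrightarrow> f x \<ge> f y)"

definition contraction :: "nat \<Rightarrow> (nat \<Rightarrow> nat) \<Rightarrow> bool" where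
  "contraction n f \<longleftrightarrow>
     (\<forall>x\<in>Xn n. \<forall>y\<in>Xn n. \<bar>int (f x) - int (f y)\<bar> \<le> \<bar>int x - int y\<bar>)"

definition ORCT :: "nat \<Rightarrow> (nat \<Rightarrow> nat) set" where
  "ORCT n = {f \<in> Xn n \<rightarrow>\<^sub>E Xn n. contraction n f \<and> (order_preserving n f \<or> order_reversing n f)}"

definition height :: "nat \<Rightarrow> (nat \<Rightarrow> nat) \<Rightarrow> nat" where
  "height n f = card (f ` Xn n)"

definition right_waist :: "nat \<Rightarrow> (nat \<Rightarrow> nat) \<Rightarrow> nat" where
  "right_waist n f = Max (f ` Xn n)"

definition F :: "nat \<Rightarrow> nat \<Rightarrow> nat \<Rightarrow> nat" where
  "F n p k = card {f \<in> ORCT n. height n f = p \<and> right_waist n f = k}"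

end

theory Submission
  imports Defs
begin

definition cnt :: "nat set \<Rightarrow> nat \<Rightarrow> nat" where
  "cnt S x = card {y\<in>S. y < x}"

lemma cnt_Suc: "cnt S (Suc x) = cnt S x + (if x \<in> S then 1 else 0)"
proof -
  have fin: "finite {y\<in>S. y < x}" by (rule finite_subset[of _ "{..<x}"]) auto
  have "{y\<in>S. y < Suc x} = (if x \<in> S then insert x {y\<in>S. y < x} else {y\<in>S. y < x})"
    by (auto simp: less_Suc_eq)
  then show ?thesis using fin by (simp add: cnt_def)
qed

lemma cnt_mono: "x \<le> y \<Longrightarrow> cnt S x \<le> cnt S y"
  unfolding cnt_def
  by (rule card_mono, rule finite_subset[of _ "{..<y}"]) auto

lemma cnt_diff: assumes "x \<le> y" shows "cnt S y \<le> cnt S x + (y - x)"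
  using assms
proof (induction rule: dec_induct)
  case base then show ?case by simp
next
  case (step m) then show ?case by (auto simp: cnt_Suc)
qed

lemma cnt_le_card: "finite S \<Longrightarrow> cnt S x \<le> card S"
  unfolding cnt_def by (rule card_mono) auto

lemma cnt_all: "S \<subseteq> {1..<n} \<Longrightarrow> cnt S n = card S"
  unfolding cnt_def by (rule arg_cong[where f=card]) auto

lemma cnt_1: "S \<subseteq> {1..<n} \<Longrightarrow> cnt S 1 = 0"
  unfolding cnt_def by (subgoal_tac "{y\<in>S. y < 1} = {}") auto

lemma image_steps:
  fixes h :: "nat \<Rightarrow> nat"
  assumes "\<And>x. a \<le> x \<Longrightarrow> x < b \<Longrightarrow> h x \<le> h (Suc x) \<and> h (Suc x) \<le> Suc (h x)"
    and "a \<le> b"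
  shows "h ` {a..b} = {h a..h b}"
  using assms
proof (induction b)
  case 0 then show ?case by simp
next
  case (Suc b)
  show ?case
  proof (cases "a = Suc b")
    case True then show ?thesis by simp
  next
    case False
    then have ab: "a \<le> b" using Suc.prems by simp
    have IH: "h ` {a..b} = {h a..h b}" using Suc ab by simp
    have st: "h b \<le> h (Suc b) \<and> h (Suc b) \<le> Suc (h b)" using Suc.prems(1) ab by simp
    have "{a..Suc b} = insert (Suc b) {a..b}" using ab by auto
    then have "h ` {a..Suc b} = insert (h (Suc b)) {h a..h b}" using IH by simp
    also have "\<dots> = {h a..h (Suc b)}"
    proof -
      have "h a \<le> h b" using IH ab by (metis atLeastAtMost_iff atLeastAtMost_singleton_iff
            atLeastatMost_empty_iff2 empty_iff image_is_empty order_refl)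
      then show ?thesis using st by (auto simp: le_Suc_eq)
    qed
    finally show ?thesis .
  qed
qed


definition phi :: "nat \<Rightarrow> (nat \<Rightarrow> nat) \<Rightarrow> nat set" where
  "phi n f = {x\<in>{1..<n}. f (Suc x) = Suc (f x)}"

definition psi :: "nat \<Rightarrow> nat \<Rightarrow> nat \<Rightarrow> nat set \<Rightarrow> nat \<Rightarrow> nat" where
  "psi n p k S = (\<lambda>x. if x \<in> Xn n then k + 1 - p + cnt S x else undefined)"

lemma op_steps:
  assumes "f \<in> ORCT n" "order_preserving n f" "1 \<le> x" "x < n"
  shows "f x \<le> f (Suc x) \<and> f (Suc x) \<le> Suc (f x)"
proof -
  have x: "x \<in> Xn n" "Suc x \<in> Xn n" using assms by (auto simp: Xn_def)
  have "f x \<le> f (Suc x)" using assms(2) x unfolding order_preserving_def by auto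
  moreover have "\<bar>int (f x) - int (f (Suc x))\<bar> \<le> \<bar>int x - int (Suc x)\<bar>"
    using assms(1) x unfolding ORCT_def contraction_def by blast
  ultimately show ?thesis by simp
qed

lemma op_formula:
  assumes "f \<in> ORCT n" "order_preserving n f" "1 \<le> x" "x \<le> n"
  shows "f x = f 1 + cnt (phi n f) x"
  using assms(3,4)
proof (induction rule: dec_induct)
  case base
  have "phi n f \<subseteq> {1..<n}" by (auto simp: phi_def)
  then show ?case using cnt_1[of "phi n f" n] by simp
next
  case (step m)
  have "f m \<le> f (Suc m) \<and> f (Suc m) \<le> Suc (f m)" using op_steps[OF assms(1,2), of m] step by simp
  then show ?case using step by (auto simp: cnt_Suc phi_def)
qed

lemma AP_props:
  assumes "f \<in> ORCT n" "order_preserving n f" "1 \<le> n"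
    "height n f = p" "right_waist n f = k"
  shows "f 1 = k + 1 - p" "card (phi n f) = p - 1" "psi n p k (phi n f) = f" "p \<le> k"
proof -
  have st: "\<And>x. 1 \<le> x \<Longrightarrow> x < n \<Longrightarrow> f x \<le> f (Suc x) \<and> f (Suc x) \<le> Suc (f x)"
    using op_steps[OF assms(1,2)] by blast
  have img: "f ` Xn n = {f 1..f n}" unfolding Xn_def by (rule image_steps[where h=f, OF st assms(3)])
  have le: "f 1 \<le> f n" using assms(2,3) unfolding order_preserving_def Xn_def by auto
  have hp: "p = Suc (f n) - f 1" using assms(4) img by (simp add: height_def)
  have "Max {f 1..f n} = f n" using le by (intro Max_eqI) auto
  then have hk: "k = f n" using assms(5) img by (simp add: right_waist_def)
  have sub: "phi n f \<subseteq> {1..<n}" by (auto simp: phi_def)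
  have fn: "f n = f 1 + card (phi n f)" using op_formula[OF assms(1,2), of n] assms(3) cnt_all[OF sub] by simp
  show "f 1 = k + 1 - p" using hp hk le by simp
  show c: "card (phi n f) = p - 1" using hp fn by simp
  have "f \<in> Xn n \<rightarrow>\<^sub>E Xn n" using assms(1) by (simp add: ORCT_def)
  moreover have "1 \<in> Xn n" using assms(3) by (simp add: Xn_def)
  ultimately have "f 1 \<in> Xn n" by (rule PiE_mem)
  then show "p \<le> k" using hp hk le fn by (simp add: Xn_def)
  show "psi n p k (phi n f) = f"
  proof
    fix x
    show "psi n p k (phi n f) x = f x"
    proof (cases "x \<in> Xn n")
      case True
      then have x1: "1 \<le> x" "x \<le> n" by (auto simp: Xn_def)
      have fx: "f x = f 1 + cnt (phi n f) x" by (rule op_formula[OF assms(1,2) x1])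
      have "f 1 = k + 1 - p" using hp hk le by simp
      then show ?thesis using fx True unfolding psi_def by presburger
    next
      case False
      have "f \<in> Xn n \<rightarrow>\<^sub>E Xn n" using assms(1) by (simp add: ORCT_def)
      then have "f x = undefined" using False by (rule PiE_arb)
      then show ?thesis using False by (simp add: psi_def)
    qed
  qed
qed


lemma psi_props:
  assumes S: "S \<subseteq> {1..<n}" "card S = p - 1" and np: "1 \<le> n" "1 \<le> p" "p \<le> k" "k \<le> n"
  defines "g \<equiv> psi n p k S"
  shows "g \<in> ORCT n" "order_preserving n g" "height n g = p" "right_waist n g = k" "phi n g = S"
proof -
  have fin: "finite S" using S(1) finite_subset by blast
  have gx: "\<And>x. x \<in> Xn n \<Longrightarrow> g x = k + 1 - p + cnt S x" by (simp add: g_def psi_def)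
  have mono: "\<And>x y. x \<in> Xn n \<Longrightarrow> y \<in> Xn n \<Longrightarrow> x \<le> y \<Longrightarrow> g x \<le> g y \<and> g y \<le> g x + (y - x)"
  proof -
    fix x y assume "x \<in> Xn n" "y \<in> Xn n" "x \<le> y"
    then show "g x \<le> g y \<and> g y \<le> g x + (y - x)"
      using gx cnt_mono[of x y S] cnt_diff[of x y S] by simp
  qed
  have range: "\<And>x. x \<in> Xn n \<Longrightarrow> g x \<in> Xn n"
  proof -
    fix x assume x: "x \<in> Xn n"
    have "cnt S x \<le> card S" by (rule cnt_le_card[OF fin])
    then have "1 \<le> g x \<and> g x \<le> n" using gx[OF x] S np by linarith
    then show "g x \<in> Xn n" by (simp add: Xn_def)
  qed
  have ext: "g \<in> Xn n \<rightarrow>\<^sub>E Xn n"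
    using range by (auto simp: g_def psi_def PiE_def extensional_def)
  have contr: "contraction n g"
    unfolding contraction_def
  proof (intro ballI)
    fix x y assume x: "x \<in> Xn n" and y: "y \<in> Xn n"
    show "\<bar>int (g x) - int (g y)\<bar> \<le> \<bar>int x - int y\<bar>"
    proof (cases "x \<le> y")
      case True then show ?thesis using mono[OF x y] by linarith
    next
      case False then show ?thesis using mono[OF y x] by linarith
    qed
  qed
  show op: "order_preserving n g" unfolding order_preserving_def using mono by blast
  show "g \<in> ORCT n" using ext contr op by (simp add: ORCT_def)
  have g1: "g 1 = k + 1 - p" using gx[of 1] np cnt_1[OF S(1)] by (simp add: Xn_def)
  have gn: "g n = k" using gx[of n] np cnt_all[OF S(1)] S(2) by (simp add: Xn_def)
  have stp: "\<And>x. 1 \<le> x \<Longrightarrow> x < n \<Longrightarrow> g (Suc x) = g x + (if x \<in> S then 1 else 0)"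
  proof -
    fix x assume "1 \<le> x" "x < n"
    then have "x \<in> Xn n" "Suc x \<in> Xn n" by (auto simp: Xn_def)
    then show "g (Suc x) = g x + (if x \<in> S then 1 else 0)" using gx cnt_Suc[of S x] by simp
  qed
  have img: "g ` Xn n = {g 1..g n}" unfolding Xn_def
    by (rule image_steps[where h=g]) (use stp np in auto)
  show "height n g = p" using img g1 gn np by (simp add: height_def)
  have "Max {g 1..g n} = g n" using g1 gn np by (intro Max_eqI) auto
  then show "right_waist n g = k" using img gn by (simp add: right_waist_def)
  show "phi n g = S"
  proof (rule set_eqI)
    fix x
    show "x \<in> phi n g \<longleftrightarrow> x \<in> S"
    proof (cases "1 \<le> x \<and> x < n")
      case True
      then have "g (Suc x) = g x + (if x \<in> S then 1 else 0)" using stp by blast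
      then show ?thesis using True unfolding phi_def by (cases "x \<in> S") auto
    next
      case False
      then show ?thesis using S(1) unfolding phi_def by auto
    qed
  qed
qed

definition rv :: "nat \<Rightarrow> (nat \<Rightarrow> nat) \<Rightarrow> nat \<Rightarrow> nat" where
  "rv n f = (\<lambda>x. if x \<in> Xn n then f (Suc n - x) else undefined)"

lemma refl_Xn: "x \<in> Xn n \<Longrightarrow> Suc n - x \<in> Xn n"
  by (auto simp: Xn_def)

lemma rv_img: "rv n f ` Xn n = f ` Xn n"
proof -
  have "rv n f ` Xn n = (\<lambda>x. f (Suc n - x)) ` Xn n" by (auto simp: rv_def)
  also have "\<dots> = f ` ((\<lambda>x. Suc n - x) ` Xn n)" by (simp add: image_image)
  also have "(\<lambda>x. Suc n - x) ` Xn n = Xn n"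
  proof
    show "(\<lambda>x. Suc n - x) ` Xn n \<subseteq> Xn n" using refl_Xn by blast
    show "Xn n \<subseteq> (\<lambda>x. Suc n - x) ` Xn n"
    proof
      fix y assume y: "y \<in> Xn n"
      then have "y = Suc n - (Suc n - y)" by (auto simp: Xn_def)
      then show "y \<in> (\<lambda>x. Suc n - x) ` Xn n" using refl_Xn[OF y] by blast
    qed
  qed
  finally show ?thesis .
qed

lemma rv_rv: assumes "f \<in> Xn n \<rightarrow>\<^sub>E Xn n" shows "rv n (rv n f) = f"
proof
  fix x
  show "rv n (rv n f) x = f x"
  proof (cases "x \<in> Xn n")
    case True
    then have "Suc n - (Suc n - x) = x" by (auto simp: Xn_def)
    then show ?thesis using True refl_Xn[OF True] by (simp add: rv_def)
  next
    case False
    have "f x = undefined" using assms False by (rule PiE_arb)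
    then show ?thesis using False by (simp add: rv_def)
  qed
qed

lemma rv_props:
  assumes "f \<in> ORCT n"
  shows "rv n f \<in> ORCT n" "height n (rv n f) = height n f" "right_waist n (rv n f) = right_waist n f"
    "order_reversing n f \<Longrightarrow> order_preserving n (rv n f)"
    "order_preserving n f \<Longrightarrow> order_reversing n (rv n f)"
proof -
  have fe: "f \<in> Xn n \<rightarrow>\<^sub>E Xn n" and fc: "contraction n f" and fo: "order_preserving n f \<or> order_reversing n f"
    using assms by (auto simp: ORCT_def)
  have rx: "\<And>x. x \<in> Xn n \<Longrightarrow> rv n f x = f (Suc n - x)" by (simp add: rv_def)
  have re: "rv n f \<in> Xn n \<rightarrow>\<^sub>E Xn n"
  proof (rule PiE_I)
    fix x assume "x \<in> Xn n"
    then show "rv n f x \<in> Xn n" using rx refl_Xn fe by (metis PiE_mem)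
  next
    fix x assume "x \<notin> Xn n" then show "rv n f x = undefined" by (simp add: rv_def)
  qed
  have rc: "contraction n (rv n f)" unfolding contraction_def
  proof (intro ballI)
    fix x y assume x: "x \<in> Xn n" and y: "y \<in> Xn n"
    have "\<bar>int (f (Suc n - x)) - int (f (Suc n - y))\<bar> \<le> \<bar>int (Suc n - x) - int (Suc n - y)\<bar>"
      using fc refl_Xn[OF x] refl_Xn[OF y] unfolding contraction_def by blast
    moreover have "\<bar>int (Suc n - x) - int (Suc n - y)\<bar> = \<bar>int x - int y\<bar>"
      using x y by (auto simp: Xn_def)
    ultimately show "\<bar>int (rv n f x) - int (rv n f y)\<bar> \<le> \<bar>int x - int y\<bar>"
      using rx x y by simp
  qed
  show r1: "order_reversing n f \<Longrightarrow> order_preserving n (rv n f)"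
    unfolding order_preserving_def
  proof (intro ballI impI)
    fix x y assume "order_reversing n f" and x: "x \<in> Xn n" and y: "y \<in> Xn n" and "x \<le> y"
    moreover have "Suc n - y \<le> Suc n - x" using \<open>x \<le> y\<close> by simp
    ultimately show "rv n f x \<le> rv n f y" using rx refl_Xn unfolding order_reversing_def by metis
  qed
  show r2: "order_preserving n f \<Longrightarrow> order_reversing n (rv n f)"
    unfolding order_reversing_def
  proof (intro ballI impI)
    fix x y assume "order_preserving n f" and x: "x \<in> Xn n" and y: "y \<in> Xn n" and "x \<le> y"
    moreover have "Suc n - y \<le> Suc n - x" using \<open>x \<le> y\<close> by simp
    ultimately show "rv n f x \<ge> rv n f y" using rx refl_Xn unfolding order_preserving_def by metis
  qed
  show "rv n f \<in> ORCT n" using re rc fo r1 r2 by (auto simp: ORCT_def)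
  show "height n (rv n f) = height n f" by (simp add: height_def rv_img)
  show "right_waist n (rv n f) = right_waist n f" by (simp add: right_waist_def rv_img)
qed

theorem proposition3p3:
  fixes n p k :: nat
  assumes "1 \<le> n" and "1 \<le> p" and "p \<le> k" and "k \<le> n"
  shows "F n p k = (if p > 1 then 2 * ((n - 1) choose (p - 1)) else 1)"
proof -
  define A where "A = {f \<in> ORCT n. height n f = p \<and> right_waist n f = k}"
  define AP where "AP = {f \<in> A. order_preserving n f}"
  define AR where "AR = {f \<in> A. order_reversing n f}"
  define T where "T = {S. S \<subseteq> {1..<n} \<and> card S = p - 1}"
  have AU: "A = AP \<union> AR" unfolding AP_def AR_def A_def ORCT_def by auto
  have finA: "finite A"
    by (rule finite_subset[of _ "Xn n \<rightarrow>\<^sub>E Xn n"]) (auto simp: A_def ORCT_def Xn_def intro: finite_PiE)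
  have finP: "finite AP" and finR: "finite AR" using finA by (auto simp: AP_def AR_def)
  have bP: "bij_betw (phi n) AP T"
  proof (rule bij_betw_byWitness[where f'="psi n p k"])
    show "\<forall>a\<in>AP. psi n p k (phi n a) = a"
      using AP_props(3) assms(1) by (auto simp: AP_def A_def)
    show "\<forall>a'\<in>T. phi n (psi n p k a') = a'"
      using psi_props(5) assms by (auto simp: T_def)
    show "phi n ` AP \<subseteq> T"
      using AP_props(2) assms(1) by (auto simp: AP_def A_def T_def phi_def)
    show "psi n p k ` T \<subseteq> AP"
      using psi_props(1-4) assms by (auto simp: AP_def A_def T_def)
  qed
  have cT: "card T = (n - 1) choose (p - 1)"
    unfolding T_def using n_subsets[of "{1..<n}" "p - 1"] by simp
  have cP: "card AP = (n - 1) choose (p - 1)" using bij_betw_same_card[OF bP] cT by simp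
  have bR: "bij_betw (rv n) AR AP"
  proof (rule bij_betw_byWitness[where f'="rv n"])
    show "\<forall>a\<in>AR. rv n (rv n a) = a"
      using rv_rv by (auto simp: AR_def A_def ORCT_def)
    show "\<forall>a'\<in>AP. rv n (rv n a') = a'"
      using rv_rv by (auto simp: AP_def A_def ORCT_def)
    show "rv n ` AR \<subseteq> AP"
      using rv_props by (auto simp: AP_def AR_def A_def)
    show "rv n ` AP \<subseteq> AR"
      using rv_props by (auto simp: AP_def AR_def A_def)
  qed
  have cR: "card AR = card AP" using bij_betw_same_card[OF bR] by simp
  have FA: "F n p k = card A" by (simp add: F_def A_def)
  show ?thesis
  proof (cases "p > 1")
    case True
    have "AP \<inter> AR = {}"
    proof (rule ccontr)
      assume "AP \<inter> AR \<noteq> {}"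
      then obtain f where fP: "f \<in> AP" and fR: "f \<in> AR" by blast
      have "f ` Xn n \<subseteq> {f 1}"
      proof
        fix y assume "y \<in> f ` Xn n"
        then obtain x where x: "x \<in> Xn n" "y = f x" by blast
        have one: "1 \<in> Xn n" "1 \<le> x" using x assms(1) by (auto simp: Xn_def)
        have "f 1 \<le> f x" using fP x one unfolding AP_def order_preserving_def by blast
        moreover have "f 1 \<ge> f x" using fR x one unfolding AR_def order_reversing_def by blast
        ultimately show "y \<in> {f 1}" using x by simp
      qed
      then have "card (f ` Xn n) \<le> 1" using card_mono[of "{f 1}"] by fastforce
      moreover have "height n f = p" using fP by (simp add: AP_def A_def)
      ultimately show False using True by (simp add: height_def)
    qed
    then have "card A = card AP + card AR" using AU finP finR card_Un_disjoint by simp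
    then show ?thesis using FA cP cR True by simp
  next
    case False
    then have p1: "p = 1" using assms(2) by simp
    have "AR \<subseteq> AP"
    proof
      fix f assume fR: "f \<in> AR"
      then have "card (f ` Xn n) = 1" using p1 by (simp add: AR_def A_def height_def)
      then obtain a where a: "f ` Xn n = {a}" using card_1_singletonE by blast
      have "order_preserving n f" unfolding order_preserving_def
      proof (intro ballI impI)
        fix x y assume "x \<in> Xn n" "y \<in> Xn n"
        then have "f x = a" "f y = a" using a by blast+
        then show "f x \<le> f y" by simp
      qed
      then show "f \<in> AP" using fR by (simp add: AP_def AR_def)
    qed
    then have "A = AP" using AU by blast
    then show ?thesis using FA cP p1 by simp
  qed
qed

end
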